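(* Let $X$ be a fibrewise locally equiconnected space over $B$ and $e:X\to X$ a fibrewise map with $e\circ e=e$. Then $(X,e(X))$ is a closed fibrewise cofibred pair.
   Context: A fibrewise space over $B$ is a space $X$ with $p_X:X\to B$; fibrewise maps satisfy $p_Y\circ f=p_X$. A fibrewise cofibration is a fibrewise map with the homotopy extension property with respect to fibrewise maps and fibrewise homotopies (homotopies $H$ with $p(H(x,t))=p(x)$); closed if also a closed embedding. $(X,A)$ is a closed fibrewise cofibred pair if $A\hookrightarrow X$ is a closed fibrewise cofibration. $X$ is fibrewise locally equiconnected if the diagonal $X\to X\times_BX=\{(x,y):p_X(x)=p_X(y)\}$ is a closed fibrewise cofibration. *)

theory Defs
  imports "HOL-Analysis.Analysis"
begin

definition fibrewise_map ::
  "'a topology \<Rightarrow> ('a \<Rightarrow> 'b) \<Rightarrow> 'c topology \<Rightarrow> ('c \<Rightarrow> 'b) \<Rightarrow> ('a \<Rightarrow> 'c) \<Rightarrow> bool" where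
  "fibrewise_map X p Y q f \<longleftrightarrow>
     continuous_map X Y f \<and> (\<forall>x\<in>topspace X. q (f x) = p x)"

definition fibrewise_homotopy ::
  "'a topology \<Rightarrow> ('a \<Rightarrow> 'b) \<Rightarrow> 'c topology \<Rightarrow> ('c \<Rightarrow> 'b) \<Rightarrow> ('a \<times> real \<Rightarrow> 'c) \<Rightarrow> bool" where
  "fibrewise_homotopy X p Y q H \<longleftrightarrow>
     continuous_map (prod_topology X (top_of_set {0..1})) Y H \<and>
     (\<forall>x\<in>topspace X. \<forall>t\<in>{0..1}. q (H (x, t)) = p x)"

text \<open>Fibrewise cofibration (fibrewise homotopy extension property) with respect to all
  fibrewise spaces over B whose points live in the type 'c (given as first argument).\<close>

definition fibrewise_cofibration ::
  "'c itself \<Rightarrow> 'b topology \<Rightarrow> 'a topology \<Rightarrow> ('a \<Rightarrow> 'b) \<Rightarrow> 'x topology \<Rightarrow> ('x \<Rightarrow> 'b)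
     \<Rightarrow> ('a \<Rightarrow> 'x) \<Rightarrow> bool" where
  "fibrewise_cofibration T B A pA X pX i \<longleftrightarrow>
     fibrewise_map A pA X pX i \<and>
     (\<forall>(Y::'c topology) q f H.
        continuous_map Y B q \<and> fibrewise_map X pX Y q f \<and> fibrewise_homotopy A pA Y q H \<and>
        (\<forall>a\<in>topspace A. H (a, 0) = f (i a)) \<longrightarrow>
        (\<exists>K. fibrewise_homotopy X pX Y q K \<and>
             (\<forall>x\<in>topspace X. K (x, 0) = f x) \<and>
             (\<forall>a\<in>topspace A. \<forall>t\<in>{0..1}. K (i a, t) = H (a, t))))"

definition closed_fibrewise_cofibration ::
  "'c itself \<Rightarrow> 'b topology \<Rightarrow> 'a topology \<Rightarrow> ('a \<Rightarrow> 'b) \<Rightarrow> 'x topology \<Rightarrow> ('x \<Rightarrow> 'b)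
     \<Rightarrow> ('a \<Rightarrow> 'x) \<Rightarrow> bool" where
  "closed_fibrewise_cofibration T B A pA X pX i \<longleftrightarrow>
     fibrewise_cofibration T B A pA X pX i \<and> embedding_map A X i \<and>
     closedin X (i ` topspace A)"

definition fibre_product :: "'a topology \<Rightarrow> ('a \<Rightarrow> 'b) \<Rightarrow> ('a \<times> 'a) topology" where
  "fibre_product X p = subtopology (prod_topology X X)
     {(x, y). x \<in> topspace X \<and> y \<in> topspace X \<and> p x = p y}"

text \<open>The test spaces are taken with points in (('a \<times> 'a) \<times> real), which contains
  (copies of) all subspaces of (X \<times>_B X) \<times> I, in particular the mapping cylinder.\<close>

definition fibrewise_LEC :: "'b topology \<Rightarrow> 'a topology \<Rightarrow> ('a \<Rightarrow> 'b) \<Rightarrow> bool" where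
  "fibrewise_LEC B X p \<longleftrightarrow>
     closed_fibrewise_cofibration TYPE(('a \<times> 'a) \<times> real) B X p
       (fibre_product X p) (\<lambda>z. p (fst z)) (\<lambda>x. (x, x))"

end

theory Submission imports Defs begin

lemma sup_cont:
  fixes F :: "'w \<times> real \<Rightarrow> real"
  assumes F: "continuous_map (prod_topology W (top_of_set {0..1})) euclideanreal F"
  shows "continuous_map W euclideanreal (\<lambda>w. Sup ((\<lambda>s. F(w,s)) ` {0..1}))"
proof -
  let ?g = "\<lambda>w. Sup ((\<lambda>s. F(w,s)) ` {0..1})"
  have att: "\<exists>s0\<in>{0..1}. (\<forall>s\<in>{0..1}. F(w,s) \<le> F(w,s0)) \<and> ?g w = F(w,s0)"
    if w: "w \<in> topspace W" for w
  proof -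
    have "continuous_map (top_of_set {0..1}) (prod_topology W (top_of_set {0..1})) (\<lambda>s. (w,s))"
      using w by (simp add: continuous_map_pairwise o_def)
    from continuous_map_compose[OF this F] have "continuous_map (top_of_set {0..1}) euclideanreal (\<lambda>s. F(w,s))"
      by (simp add: o_def)
    then have c: "continuous_on {0..1} (\<lambda>s. F(w,s))" by simp
    obtain s0 where s0: "s0 \<in> {0..1}" "\<forall>s\<in>{0..1}. F(w,s) \<le> F(w,s0)"
      using continuous_attains_sup[OF compact_Icc _ c] by fastforce
    have "?g w = F(w,s0)"
      by (rule cSup_eq_maximum) (use s0 in auto)
    with s0 show ?thesis by blast
  qed
  have gt: "{w \<in> topspace W. ?g w > a} = fst ` {z \<in> topspace (prod_topology W (top_of_set {0..1})). F z \<in> {a<..}}" for a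
  proof -
    have "w \<in> fst ` {z \<in> topspace (prod_topology W (top_of_set {0..1})). F z \<in> {a<..}}"
      if "w \<in> topspace W" "?g w > a" for w
      using att[OF that(1)] that by (force intro: image_eqI[where x="(w, _)"])
    moreover have "?g w > a \<and> w \<in> topspace W" if wA: "w \<in> fst ` {z \<in> topspace (prod_topology W (top_of_set {0..1})). F z \<in> {a<..}}" for w
    proof -
      obtain s where s: "w \<in> topspace W" "s \<in> {0..1}" "F(w,s) > a" using wA by fastforce
      with att[OF s(1)] show ?thesis by force
    qed
    ultimately show ?thesis by blast
  qed
  have lt: "{w \<in> topspace W. ?g w < a} = topspace W - fst ` {z \<in> topspace (prod_topology W (top_of_set {0..1})). F z \<in> {a..}}" for a
  proof -
    have "w \<notin> fst ` {z \<in> topspace (prod_topology W (top_of_set {0..1})). F z \<in> {a..}}"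
      if "w \<in> topspace W" "?g w < a" for w
      using att[OF that(1)] that by force
    moreover have "?g w < a" if w1: "w \<in> topspace W" and w2: "w \<notin> fst ` {z \<in> topspace (prod_topology W (top_of_set {0..1})). F z \<in> {a..}}" for w
    proof -
      obtain s0 where "s0 \<in> {0..1}" "?g w = F(w,s0)" using att[OF w1] by blast
      with w1 w2 show ?thesis by (force intro: image_eqI[where x="(w, s0)"])
    qed
    ultimately show ?thesis by blast
  qed
  have cs: "compact_space (top_of_set {0..1::real})"
    by (simp add: compact_space_subtopology compactin_subtopology)
  show ?thesis
    unfolding continuous_map_upper_lower_semicontinuous_lt
  proof (intro allI conjI)
    fix a
    show "openin W {w \<in> topspace W. ?g w > a}"
      unfolding gt
      by (rule open_map_fst[unfolded open_map_def, rule_format], rule openin_continuous_map_preimage[OF F]) auto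
    show "openin W {w \<in> topspace W. ?g w < a}"
      unfolding lt
      by (rule openin_diff, simp, rule closed_map_fst[OF cs, unfolded closed_map_def, rule_format],
          rule closedin_continuous_map_preimage[OF F]) auto
  qed
qed


theorem corollary4p7:
  fixes B :: "'b topology" and X :: "'a topology" and p :: "'a \<Rightarrow> 'b" and e :: "'a \<Rightarrow> 'a"
  assumes "continuous_map X B p"
    and "fibrewise_LEC B X p"
    and "fibrewise_map X p X p e"
    and "\<forall>x\<in>topspace X. e (e x) = e x"
  shows "closed_fibrewise_cofibration TYPE('c) B (subtopology X (e ` topspace X)) p X p id"
proof -
  define W where "W = fibre_product X p"
  define Dg where "Dg = (\<lambda>x::'a. (x,x)) ` topspace X"
  have topW: "topspace W = {(x,y). x \<in> topspace X \<and> y \<in> topspace X \<and> p x = p y}"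
    by (auto simp: W_def fibre_product_def)
  have cW1: "continuous_map W X fst" and cW2: "continuous_map W X snd"
    by (simp_all add: W_def fibre_product_def continuous_map_from_subtopology continuous_map_fst continuous_map_snd)
  have LEC: "closed_fibrewise_cofibration TYPE(('a \<times> 'a) \<times> real) B X p W (\<lambda>z. p (fst z)) (\<lambda>x. (x, x))"
    using assms(2) unfolding fibrewise_LEC_def W_def .
  have clDg: "closedin W Dg" using LEC by (simp add: closed_fibrewise_cofibration_def Dg_def)
  have HEP: "\<exists>K. fibrewise_homotopy W (\<lambda>z. p (fst z)) Y q K \<and> (\<forall>x\<in>topspace W. K (x, 0) = f x)
              \<and> (\<forall>a\<in>topspace X. \<forall>t\<in>{0..1}. K ((a,a), t) = H (a, t))"
    if "continuous_map Y B q" "fibrewise_map W (\<lambda>z. p (fst z)) Y q f" "fibrewise_homotopy X p Y q H"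
       "\<forall>a\<in>topspace X. H (a, 0) = f (a,a)"
    for Y :: "(('a\<times>'a)\<times>real) topology" and q f H
    using LEC that unfolding closed_fibrewise_cofibration_def fibrewise_cofibration_def by blast
  define M where "M = (topspace W \<times> {0::real}) \<union> (Dg \<times> {0..1})"
  define Y where "Y = subtopology (prod_topology W (top_of_set {0..1::real})) M"
  define q where "q = (\<lambda>z::('a\<times>'a)\<times>real. p (fst (fst z)))"
  have DgW: "Dg \<subseteq> topspace W" using topW by (auto simp: Dg_def)
  have cq: "continuous_map Y B q"
  proof -
    have "continuous_map (prod_topology W (top_of_set {0..1::real})) B (p \<circ> (fst \<circ> fst))"
      by (intro continuous_map_compose[OF continuous_map_compose[OF continuous_map_fst cW1] assms(1)])
    then show ?thesis unfolding Y_def q_def by (simp add: o_def continuous_map_from_subtopology)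
  qed
  have f0: "fibrewise_map W (\<lambda>z. p (fst z)) Y q (\<lambda>w. (w, 0))"
    unfolding fibrewise_map_def Y_def q_def M_def
    by (auto simp: continuous_map_in_subtopology continuous_map_pairwise o_def)
  have cdiag: "continuous_map X W (\<lambda>x. (x,x))"
    unfolding W_def fibre_product_def
    by (auto simp: continuous_map_in_subtopology continuous_map_pairwise o_def)
  have H0: "fibrewise_homotopy X p Y q (\<lambda>(x,t). ((x,x),t))"
    unfolding fibrewise_homotopy_def Y_def q_def M_def
  proof (intro conjI ballI)
    show "continuous_map (prod_topology X (top_of_set {0..1::real})) (subtopology (prod_topology W (top_of_set {0..1::real})) (topspace W \<times> {0} \<union> Dg \<times> {0..1})) (\<lambda>(x, t). ((x, x), t))"
    proof -
      have "continuous_map (prod_topology X (top_of_set {0..1::real})) W ((\<lambda>x. (x,x)) \<circ> fst)"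
        by (rule continuous_map_compose[OF continuous_map_fst cdiag])
      then have "continuous_map (prod_topology X (top_of_set {0..1::real})) (prod_topology W (top_of_set {0..1::real})) (\<lambda>(x, t). ((x, x), t))"
        by (auto simp: continuous_map_pairwise o_def case_prod_unfold continuous_map_snd)
      moreover have "(\<lambda>(x, t). ((x, x), t)) ` topspace (prod_topology X (top_of_set {0..1::real})) \<subseteq> topspace W \<times> {0} \<union> Dg \<times> {0..1}"
        by (auto simp: Dg_def)
      ultimately show ?thesis by (simp add: continuous_map_in_subtopology image_subset_iff_funcset)
    qed
  qed auto
  obtain K where K: "fibrewise_homotopy W (\<lambda>z. p (fst z)) Y q K" "\<forall>w\<in>topspace W. K (w, 0) = (w, 0)"
      "\<forall>a\<in>topspace X. \<forall>t\<in>{0..1}. K ((a,a), t) = ((a,a), t)"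
    using HEP[OF cq f0 H0] by auto
  have cK: "continuous_map (prod_topology W (top_of_set {0..1})) Y K"
    using K(1) by (simp add: fibrewise_homotopy_def)
  have KM: "K (w,t) \<in> M" if "w \<in> topspace W" "t \<in> {0..1}" for w t
    using continuous_map_image_subset_topspace[OF cK] that by (auto simp: Y_def)
  have Kq: "p (fst (fst (K (w,t)))) = p (fst w)" if "w \<in> topspace W" "t \<in> {0..1}" for w t
    using K(1) that by (simp add: fibrewise_homotopy_def q_def)
  have cD: "continuous_map (prod_topology W (top_of_set {0..1})) W (\<lambda>z. fst (K z))"
    using continuous_map_compose[OF cK[unfolded Y_def, THEN continuous_map_into_fulltopology] continuous_map_fst]
    by (simp add: o_def)
  have cS: "continuous_map (prod_topology W (top_of_set {0..1})) euclideanreal (\<lambda>z. snd (K z))"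
    using continuous_map_compose[OF cK[unfolded Y_def, THEN continuous_map_into_fulltopology] continuous_map_snd]
    by (simp add: o_def continuous_map_into_fulltopology)
  have DW: "fst (K (w,t)) \<in> topspace W" and S01: "snd (K (w,t)) \<in> {0..1}"
    and Spos: "snd (K (w,t)) > 0 \<Longrightarrow> fst (K (w,t)) \<in> Dg"
    if "w \<in> topspace W" "t \<in> {0..1}" for w t
    using KM[OF that] DgW by (auto simp: M_def)
  define u where "u = (\<lambda>w. Sup ((\<lambda>s. s - snd (K (w,s))) ` {0..1::real}))"
  have cu: "continuous_map W euclideanreal u"
  proof -
    have "continuous_map (prod_topology W (top_of_set {0..1})) euclideanreal (\<lambda>z. snd z - snd (K z))"
      by (intro continuous_map_diff cS continuous_map_into_fulltopology[OF continuous_map_snd])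
    from sup_cont[OF this] show ?thesis by (simp add: u_def)
  qed
  have uge: "u w \<ge> t - snd (K (w,t))" if "w \<in> topspace W" "t \<in> {0..1}" for w t
    unfolding u_def
  proof (rule cSup_upper)
    show "bdd_above ((\<lambda>s. s - snd (K (w, s))) ` {0..1})"
      by (rule bdd_aboveI[where M=1]) (use S01[OF that(1)] in force)
  qed (use that in auto)
  have u0: "u w \<ge> 0" if "w \<in> topspace W" for w
    using uge[OF that, of 0] K(2) that by simp
  have uDg: "u d = 0" if dD: "d \<in> Dg" for d
  proof -
    obtain a where a: "a \<in> topspace X" "d = (a,a)" using dD by (auto simp: Dg_def)
    have "(\<lambda>s. s - snd (K (d, s))) ` {0..1::real} = {0}"
      using K(3) a by force
    then show ?thesis by (simp add: u_def)
  qed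
  have key: "fst (K (w,t)) \<in> Dg" if "w \<in> topspace W" "t \<in> {0..1}" "t > u w" for w t
    using uge[OF that(1,2)] that by (intro Spos) auto
  have uzero: "w \<in> Dg" if w: "w \<in> topspace W" and "u w = 0" for w
  proof -
    have "continuous_map (top_of_set {0..1}) (prod_topology W (top_of_set {0..1::real})) (\<lambda>s. (w,s))"
      using w by (simp add: continuous_map_pairwise o_def)
    from continuous_map_compose[OF this cD]
    have "continuous_map (top_of_set {0..1}) W (\<lambda>s. fst (K (w,s)))" by (simp add: o_def)
    from closedin_continuous_map_preimage[OF this clDg]
    have "closedin (top_of_set {0..1}) {s \<in> {0..1::real}. fst (K (w,s)) \<in> Dg}" by simp
    then obtain T where T: "closed T" "{s \<in> {0..1::real}. fst (K (w,s)) \<in> Dg} = T \<inter> {0..1}"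
      by (auto simp: closedin_closed)
    have "{0<..1::real} \<subseteq> T" using key[OF w] T(2) \<open>u w = 0\<close> by auto
    then have "closure {0<..1::real} \<subseteq> T" using T(1) by (meson closure_minimal)
    then have "(0::real) \<in> T" by auto
    then have "(0::real) \<in> T \<inter> {0..1}" by simp
    then have "(0::real) \<in> {s \<in> {0..1::real}. fst (K (w,s)) \<in> Dg}" by (simp only: T(2))
    then have "fst (K (w,0)) \<in> Dg" by blast
    then show ?thesis using K(2) w by simp
  qed
  define A where "A = e ` topspace X"
  have ce: "continuous_map X X e" and pe: "\<And>x. x \<in> topspace X \<Longrightarrow> p (e x) = p x"
    using assms(3) by (auto simp: fibrewise_map_def)
  have eX: "e x \<in> topspace X" if "x \<in> topspace X" for x
    using ce that by (meson continuous_map_image_subset_topspace image_subset_iff)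
  have AX: "A \<subseteq> topspace X" using eX by (auto simp: A_def)
  have eA: "e x \<in> A" if "x \<in> topspace X" for x using that by (simp add: A_def)
  have A_iff: "x \<in> A \<longleftrightarrow> e x = x" if "x \<in> topspace X" for x
    using assms(4) that unfolding A_def by (metis image_eqI imageE)
  define wx where "wx = (\<lambda>x. (x, e x))"
  have cwx: "continuous_map X W wx"
    unfolding W_def fibre_product_def wx_def
    by (auto simp: continuous_map_in_subtopology continuous_map_pairwise o_def ce eX pe)
  have wxW: "wx x \<in> topspace W" if "x \<in> topspace X" for x
    using continuous_map_image_subset_topspace[OF cwx] that by auto
  have wxDg: "wx x \<in> Dg \<longleftrightarrow> x \<in> A" if "x \<in> topspace X" for x
    using A_iff[OF that] that by (auto simp: wx_def Dg_def)
  have clA: "closedin X A"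
  proof -
    have "A = {x \<in> topspace X. wx x \<in> Dg}" using wxDg AX by auto
    then show ?thesis using closedin_continuous_map_preimage[OF cwx clDg] by simp
  qed
  define T where "T = (\<lambda>x. 2 * u (wx x))"
  have cT: "continuous_map X euclideanreal T"
    unfolding T_def using continuous_map_compose[OF cwx cu]
    by (intro continuous_map_real_mult_left) (simp add: o_def)
  have T0: "T x \<ge> 0" if "x \<in> topspace X" for x using u0[OF wxW[OF that]] by (simp add: T_def)
  have TA: "T a = 0" if "a \<in> A" for a
  proof -
    have "a \<in> topspace X" using that AX by auto
    then have "wx a \<in> Dg" using wxDg that by blast
    then show ?thesis using uDg by (simp add: T_def)
  qed
  define cl where "cl = (\<lambda>s::real. max 0 (min 1 s))"
  have cl01: "cl s \<in> {0..1}" for s by (simp add: cl_def)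
  have ccl: "continuous_map Z euclideanreal (\<lambda>z. cl (g z))" if "continuous_map Z euclideanreal g" for Z g
    unfolding cl_def using that by (intro continuous_intros) auto
  define G where "G = (\<lambda>(x,t). if t \<le> T x then fst (fst (K (wx x, t))) else snd (fst (K (wx x, cl (2 * T x - t)))))"
  have c1: "continuous_map (prod_topology X (top_of_set {0..1})) (prod_topology W (top_of_set {0..1::real})) (\<lambda>z. (wx (fst z), snd z))"
    using continuous_map_compose[OF continuous_map_fst cwx]
    by (simp add: continuous_map_pairwise o_def continuous_map_snd)
  have c2: "continuous_map (prod_topology X (top_of_set {0..1})) (prod_topology W (top_of_set {0..1::real})) (\<lambda>z. (wx (fst z), cl (2 * T (fst z) - snd z)))"
  proof -
    have "continuous_map (prod_topology X (top_of_set {0..1::real})) euclideanreal (\<lambda>z. cl (2 * T (fst z) - snd z))"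
      using continuous_map_compose[OF continuous_map_fst cT]
      by (intro ccl continuous_map_diff continuous_map_real_mult_left continuous_map_into_fulltopology[OF continuous_map_snd]) (simp add: o_def)
    then have "continuous_map (prod_topology X (top_of_set {0..1::real})) (top_of_set {0..1}) (\<lambda>z. cl (2 * T (fst z) - snd z))"
      by (simp add: continuous_map_in_subtopology Pi_iff cl_def)
    then show ?thesis
      using continuous_map_compose[OF continuous_map_fst cwx]
      by (simp add: continuous_map_pairwise o_def)
  qed
  have cG: "continuous_map (prod_topology X (top_of_set {0..1})) X G"
  proof -
    have "continuous_map (prod_topology X (top_of_set {0..1})) X
      (\<lambda>z. if snd z \<le> T (fst z) then fst (fst (K (wx (fst z), snd z))) else snd (fst (K (wx (fst z), cl (2 * T (fst z) - snd z)))))"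
    proof (rule continuous_map_cases_le)
      show "continuous_map (prod_topology X (top_of_set {0..1})) euclideanreal snd"
        by (rule continuous_map_into_fulltopology[OF continuous_map_snd])
      show "continuous_map (prod_topology X (top_of_set {0..1})) euclideanreal (\<lambda>z. T (fst z))"
        using continuous_map_compose[OF continuous_map_fst cT] by (simp add: o_def)
      show "continuous_map (subtopology (prod_topology X (top_of_set {0..1})) {z \<in> topspace (prod_topology X (top_of_set {0..1})). snd z \<le> T (fst z)}) X (\<lambda>z. fst (fst (K (wx (fst z), snd z))))"
        using continuous_map_compose[OF continuous_map_compose[OF c1 cD] cW1]
        by (intro continuous_map_from_subtopology) (simp add: o_def)
      show "continuous_map (subtopology (prod_topology X (top_of_set {0..1})) {z \<in> topspace (prod_topology X (top_of_set {0..1})). T (fst z) \<le> snd z}) X (\<lambda>z. snd (fst (K (wx (fst z), cl (2 * T (fst z) - snd z)))))"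
        using continuous_map_compose[OF continuous_map_compose[OF c2 cD] cW2]
        by (intro continuous_map_from_subtopology) (simp add: o_def)
    next
      fix z assume z: "z \<in> topspace (prod_topology X (top_of_set {0..1::real}))" "snd z = T (fst z)"
      obtain x t where xt: "z = (x,t)" "x \<in> topspace X" "t \<in> {0..1}" using z(1) by auto
      have tT: "t = T x" using z(2) xt by simp
      have clT: "cl (2 * T x - t) = t" using tT xt(3) by (simp add: cl_def)
      have "fst (K (wx x, t)) \<in> Dg"
      proof (cases "u (wx x) = 0")
        case True
        then have "wx x \<in> Dg" using uzero wxW xt by blast
        moreover have "t = 0" using tT True by (simp add: T_def)
        ultimately show ?thesis using K(2) wxW[OF xt(2)] by simp
      next
        case False
        then have "u (wx x) > 0" using u0[OF wxW[OF xt(2)]] by simp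
        then have "t > u (wx x)" using tT by (simp add: T_def)
        then show ?thesis using key wxW xt by blast
      qed
      then show "fst (fst (K (wx (fst z), snd z))) = snd (fst (K (wx (fst z), cl (2 * T (fst z) - snd z))))"
        using xt clT by (auto simp: Dg_def)
    qed
    then show ?thesis by (simp add: G_def case_prod_unfold)
  qed
  have GX: "G (x,t) \<in> topspace X" if "x \<in> topspace X" "t \<in> {0..1}" for x t
    using continuous_map_image_subset_topspace[OF cG] that by auto
  have Gp: "p (G (x,t)) = p x" if "x \<in> topspace X" "t \<in> {0..1}" for x t
  proof -
    have "p (fst (fst (K (wx x, s)))) = p x" if "s \<in> {0..1}" for s
      using Kq[OF wxW[OF \<open>x \<in> topspace X\<close>] that] by (simp add: wx_def)
    moreover have "p (snd (fst (K (wx x, s)))) = p x" if "s \<in> {0..1}" for s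
      using DW[OF wxW[OF \<open>x \<in> topspace X\<close>] that] Kq[OF wxW[OF \<open>x \<in> topspace X\<close>] that] topW
      by (auto simp: wx_def)
    ultimately show ?thesis using that cl01 by (simp add: G_def)
  qed
  have G0: "G (x,0) = x" if "x \<in> topspace X" for x
    using T0[OF that] K(2) wxW[OF that] by (simp add: G_def wx_def)
  have G2T: "G (x, 2 * T x) = e x" if "x \<in> topspace X" for x
  proof (cases "T x = 0")
    case True
    then have "u (wx x) = 0" by (simp add: T_def)
    then have "x \<in> A" using uzero wxW wxDg that by blast
    then show ?thesis using True G0[OF that] A_iff[OF that] by simp
  next
    case False
    then have "T x > 0" using T0[OF that] by simp
    then show ?thesis using K(2) wxW[OF that] by (simp add: G_def cl_def wx_def)
  qed
  have topA: "topspace (subtopology X A) = A" using AX by auto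
  show ?thesis
    unfolding closed_fibrewise_cofibration_def fibrewise_cofibration_def A_def[symmetric] topA
  proof (intro conjI allI impI)
    show fm: "fibrewise_map (subtopology X A) p X p id"
      by (simp add: fibrewise_map_def continuous_map_from_subtopology)
    show "closedin X (id ` A)" using clA by simp
    show "embedding_map (subtopology X A) X id"
      using AX by (simp add: embedding_map_def Int_absorb1)
    fix Y' :: "'c topology" and q' f' H'
    assume asm: "continuous_map Y' B q' \<and> fibrewise_map X p Y' q' f' \<and> fibrewise_homotopy (subtopology X A) p Y' q' H' \<and> (\<forall>a\<in>A. H' (a, 0) = f' (id a))"
    then have cf': "continuous_map X Y' f'" and qf': "\<And>x. x \<in> topspace X \<Longrightarrow> q' (f' x) = p x"
      and cH': "continuous_map (prod_topology (subtopology X A) (top_of_set {0..1})) Y' H'"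
      and qH': "\<And>a t. a \<in> A \<Longrightarrow> t \<in> {0..1} \<Longrightarrow> q' (H' (a,t)) = p a"
      and H'0: "\<And>a. a \<in> A \<Longrightarrow> H' (a,0) = f' a"
      using AX by (auto simp: fibrewise_map_def fibrewise_homotopy_def)
    define K' where "K' = (\<lambda>(x,t). if t \<le> 2 * T x then f' (G (x,t)) else H' (e x, max 0 (t - 2 * T x)))"
    have cK': "continuous_map (prod_topology X (top_of_set {0..1})) Y' K'"
    proof -
      have "continuous_map (prod_topology X (top_of_set {0..1})) Y'
        (\<lambda>z. if snd z \<le> 2 * T (fst z) then f' (G z) else H' (e (fst z), max 0 (snd z - 2 * T (fst z))))"
      proof (rule continuous_map_cases_le)
        show "continuous_map (prod_topology X (top_of_set {0..1})) euclideanreal snd"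
          by (rule continuous_map_into_fulltopology[OF continuous_map_snd])
        show "continuous_map (prod_topology X (top_of_set {0..1})) euclideanreal (\<lambda>z. 2 * T (fst z))"
          using continuous_map_compose[OF continuous_map_fst cT]
          by (intro continuous_map_real_mult_left) (simp add: o_def)
        show "continuous_map (subtopology (prod_topology X (top_of_set {0..1})) {z \<in> topspace (prod_topology X (top_of_set {0..1})). snd z \<le> 2 * T (fst z)}) Y' (\<lambda>z. f' (G z))"
          using continuous_map_compose[OF cG cf']
          by (intro continuous_map_from_subtopology) (simp add: o_def)
        have "continuous_map (prod_topology X (top_of_set {0..1::real})) euclideanreal (\<lambda>z. max 0 (snd z - 2 * T (fst z)))"
          using continuous_map_compose[OF continuous_map_fst cT]
          by (intro continuous_intros continuous_map_into_fulltopology[OF continuous_map_snd]) (simp_all add: o_def)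
        moreover have "max 0 (snd z - 2 * T (fst z)) \<in> {0..1}" if "z \<in> topspace (prod_topology X (top_of_set {0..1::real}))" for z
          using that T0 by (force simp: mem_Times_iff)
        ultimately have m2: "continuous_map (prod_topology X (top_of_set {0..1::real})) (top_of_set {0..1}) (\<lambda>z. max 0 (snd z - 2 * T (fst z)))"
          by (simp add: continuous_map_in_subtopology Pi_iff)
        have m1: "continuous_map (prod_topology X (top_of_set {0..1::real})) (subtopology X A) (\<lambda>z. e (fst z))"
          using continuous_map_compose[OF continuous_map_fst ce] eA
          by (auto simp: continuous_map_in_subtopology o_def)
        have "continuous_map (prod_topology X (top_of_set {0..1::real})) (prod_topology (subtopology X A) (top_of_set {0..1})) (\<lambda>z. (e (fst z), max 0 (snd z - 2 * T (fst z))))"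
          using m1 m2 by (simp add: continuous_map_pairwise o_def)
        from continuous_map_compose[OF this cH']
        show "continuous_map (subtopology (prod_topology X (top_of_set {0..1})) {z \<in> topspace (prod_topology X (top_of_set {0..1})). 2 * T (fst z) \<le> snd z}) Y' (\<lambda>z. H' (e (fst z), max 0 (snd z - 2 * T (fst z))))"
          by (intro continuous_map_from_subtopology) (simp add: o_def)
      next
        fix z assume z: "z \<in> topspace (prod_topology X (top_of_set {0..1::real}))" "snd z = 2 * T (fst z)"
        obtain x t where xt: "z = (x,t)" "x \<in> topspace X" "t \<in> {0..1}" using z(1) by auto
        show "f' (G z) = H' (e (fst z), max 0 (snd z - 2 * T (fst z)))"
          using xt z(2) G2T[OF xt(2)] H'0[OF eA[OF xt(2)]] by simp
      qed
      then show ?thesis by (rule continuous_map_eq) (auto simp: K'_def)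
    qed
    show "\<exists>K. fibrewise_homotopy X p Y' q' K \<and> (\<forall>x\<in>topspace X. K (x, 0) = f' x) \<and> (\<forall>a\<in>A. \<forall>t\<in>{0..1}. K (id a, t) = H' (a, t))"
    proof (intro exI conjI ballI)
      show "fibrewise_homotopy X p Y' q' K'"
        unfolding fibrewise_homotopy_def
      proof (intro conjI ballI cK')
        fix x and t :: real assume x: "x \<in> topspace X" and t: "t \<in> {0..1}"
        show "q' (K' (x, t)) = p x"
          using qf'[OF GX[OF x t]] Gp[OF x t] qH'[OF eA[OF x], of "max 0 (t - 2 * T x)"] pe[OF x] t T0[OF x]
          by (auto simp: K'_def)
      qed
      show "K' (x, 0) = f' x" if "x \<in> topspace X" for x
        using T0[OF that] G0[OF that] by (simp add: K'_def)
      show "K' (id a, t) = H' (a, t)" if "a \<in> A" "t \<in> {0..1}" for a t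
      proof (cases "t = 0")
        case True
        then show ?thesis using that AX G0 H'0 TA by (auto simp: K'_def)
      next
        case False
        then show ?thesis using that AX TA A_iff by (auto simp: K'_def)
      qed
    qed
  qed
qed
end
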